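(* Let $\tau$ be a $T_1$-topology on $\mathcal{C}(p,q)$ such that $(\mathcal{C}(p,q),\tau)$ is a semitopological semigroup and the maps $\mathcal{C}(p,q)\to E(\mathcal{C}(p,q))$, $x\mapsto xx^{-1}$ and $x\mapsto x^{-1}x$, are continuous. If for some idempotent $q^ip^i$, $i\in\omega$, there exists an open neighbourhood $U$ of $q^ip^i$ in $(\mathcal{C}(p,q),\tau)$ such that $U\cap E(\mathcal{C}(p,q))$ is finite, then $\tau$ is discrete.
   Context: The bicyclic monoid $\mathcal{C}(p,q)$ is the monoid generated by $p,q$ subject only to $pq=1$; elements are uniquely $q^ip^j$, $i,j\in\omega$, with multiplication $q^kp^l\cdot q^mp^n = q^{k-l+m}p^n$ if $l<m$, $=q^kp^n$ if $l=m$, $=q^kp^{l-m+n}$ if $l>m$, and inversion $(q^ip^j)^{-1}=q^jp^i$. $E(\mathcal{C}(p,q))=\{q^ip^i:i\in\omega\}$. Semitopological semigroup: multiplication separately continuous. *)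

theory Defs
  imports "HOL-Analysis.Analysis"
begin

text \<open>The bicyclic monoid C(p,q): the pair (i,j) stands for q^i p^j.\<close>

type_synonym bicyclic = "nat \<times> nat"

fun bc_mult :: "bicyclic \<Rightarrow> bicyclic \<Rightarrow> bicyclic" where
  "bc_mult (k, l) (m, n) =
     (if l < m then (k + m - l, n)
      else if l = m then (k, n)
      else (k, l + n - m))"

fun bc_inv :: "bicyclic \<Rightarrow> bicyclic" where
  "bc_inv (i, j) = (j, i)"

definition bc_idempotents :: "bicyclic set" where
  "bc_idempotents = {(i, i) | i. True}"

definition semitopological_bicyclic :: "bicyclic topology \<Rightarrow> bool" where
  "semitopological_bicyclic T \<longleftrightarrow> topspace T = UNIV \<and>
     (\<forall>a. continuous_map T T (\<lambda>x. bc_mult a x) \<and> continuous_map T T (\<lambda>x. bc_mult x a))"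

end

theory Submission
  imports Defs
begin

theorem lemma3:
  fixes T :: "bicyclic topology"
  assumes "t1_space T"
    and "semitopological_bicyclic T"
    and "continuous_map T (subtopology T bc_idempotents) (\<lambda>x. bc_mult x (bc_inv x))"
    and "continuous_map T (subtopology T bc_idempotents) (\<lambda>x. bc_mult (bc_inv x) x)"
    and "\<exists>i U. openin T U \<and> (i, i) \<in> U \<and> finite (U \<inter> bc_idempotents)"
  shows "T = discrete_topology UNIV"
proof -
  have top: "topspace T = UNIV" using assms(2) unfolding semitopological_bicyclic_def by blast
  have cl: "\<And>S. finite S \<Longrightarrow> closedin T S"
    using assms(1) top by (simp add: t1_space_closedin_finite)
  have lc: "\<And>a. continuous_map T T (\<lambda>x. bc_mult a x)" and rc: "\<And>a. continuous_map T T (\<lambda>x. bc_mult x a)"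
    using assms(2) unfolding semitopological_bicyclic_def by blast+
  obtain i U where U: "openin T U" "(i, i) \<in> U" "finite (U \<inter> bc_idempotents)"
    using assms(5) by blast
  define V where "V = U - (U \<inter> bc_idempotents - {(i,i)})"
  have Vo: "openin T V" unfolding V_def using U cl by (intro openin_diff) auto
  have VE: "V \<inter> bc_idempotents = {(i,i)}"
    using U(2) unfolding V_def bc_idempotents_def by auto
  have VEo: "openin (subtopology T bc_idempotents) {(i,i)}"
    using openin_subtopology_Int[OF Vo, of bc_idempotents] VE by simp
  have r: "openin T {x \<in> topspace T. bc_mult x (bc_inv x) \<in> {(i,i)}}"
    by (rule openin_continuous_map_preimage[OF assms(3) VEo])
  have c: "openin T {x \<in> topspace T. bc_mult (bc_inv x) x \<in> {(i,i)}}"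
    by (rule openin_continuous_map_preimage[OF assms(4) VEo])
  have eq: "{x \<in> topspace T. bc_mult x (bc_inv x) \<in> {(i,i)}} \<inter> {x \<in> topspace T. bc_mult (bc_inv x) x \<in> {(i,i)}} = {(i,i)}"
    by (auto simp: top)
  have ii: "openin T {(i,i)}" using openin_Int[OF r c] eq by simp
  have "openin T {(m,n)}" for m n
  proof -
    define f where "f = (\<lambda>x. bc_mult (bc_mult (i,m) x) (n,i))"
    have fc: "continuous_map T T f" unfolding f_def
      using continuous_map_compose[OF lc[of "(i,m)"] rc[of "(n,i)"]] by (simp add: o_def)
    define P where "P = {x \<in> topspace T. f x \<in> {(i,i)}}"
    have Po: "openin T P" unfolding P_def by (rule openin_continuous_map_preimage[OF fc ii])
    have Psub: "P \<subseteq> {..m} \<times> {..n}"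
    proof
      fix x assume "x \<in> P"
      then obtain a b where x: "x = (a,b)" and "f (a,b) = (i,i)" unfolding P_def by (cases x) auto
      then show "x \<in> {..m} \<times> {..n}" unfolding f_def
        by (auto split: if_splits)
    qed
    have mn: "(m,n) \<in> P" unfolding P_def f_def by (simp add: top)
    have fin: "finite (P - {(m,n)})" using Psub by (meson finite_Diff finite_SigmaI finite_atMost finite_subset)
    have "openin T (P - (P - {(m,n)}))" using Po cl[OF fin] by (rule openin_diff)
    moreover have "P - (P - {(m,n)}) = {(m,n)}" using mn by auto
    ultimately show ?thesis by simp
  qed
  then show ?thesis using top discrete_topology_unique[of UNIV T] by (metis surj_pair)
qed

end
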